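(* Let $\mathcal{G}=(\mathcal{V},\mathcal{E})$ be a square lattice with open boundary conditions and one smooth defect. Concretely, take a finite rectangular grid graph and remove a square block of plaquettes lying in its interior: delete the vertices and edges strictly inside the block and keep the cycle of edges that bounds it. All edges carry the same positive weight, and $T=\emptyset$. Let $\Gamma\subseteq\mathcal{E}$ be the set of edges crossed by a path on the dual lattice that connects the defect (the face formed by the removed block) to the external boundary (the outer face). Let $E,E'\subseteq\mathcal{E}$ be any two uncorrectable chains. Then there is a sequence of chains $E=E_0,E_1,\ldots,E_k=E'$ such that each $E_{i+1}$ is obtained from $E_i$ by adding or removing a single edge (i.e. $|E_i\oplus E_{i+1}|=1$), and every $E_i$ is uncorrectable.
   Context: A chain is a subset of edges. Its boundary $\partial E$ is the set of vertices incident to an odd number of edges of $E$. The symbol $\oplus$ denotes symmetric difference. Given edge weights $\phi(e)$, the weight of a chain is $\phi(E)=\sum_{e\in E}\phi(e)$. $\mathcal{C}_{min}(S,T)$ is the set of minimum-weight chains $R$ with $(\partial R)\setminus T=S$; here $T=\emptyset$. The parity of a chain is $\epsilon(E)=|E\cap\Gamma|\bmod 2$. An error chain $E$ with syndrome $S=(\partial E)\setminus T$ is correctable iff $\epsilon(R)=\epsilon(E)$ for all $R\in\mathcal{C}_{min}(S,T)$, and uncorrectable otherwise. *)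

theory Defs
  imports Complex_Main
begin

type_synonym vtx = "int \<times> int"
type_synonym edge = "vtx set"

definition bd :: "edge set \<Rightarrow> vtx set" where
  "bd E = {v. odd (card {e \<in> E. v \<in> e})}"

definition symdiff :: "'a set \<Rightarrow> 'a set \<Rightarrow> 'a set" where
  "symdiff A B = (A - B) \<union> (B - A)"

definition chain_weight :: "(edge \<Rightarrow> real) \<Rightarrow> edge set \<Rightarrow> real" where
  "chain_weight \<phi> E = (\<Sum>e\<in>E. \<phi> e)"

definition Cmin :: "edge set \<Rightarrow> (edge \<Rightarrow> real) \<Rightarrow> vtx set \<Rightarrow> vtx set \<Rightarrow> edge set set" where
  "Cmin Ed \<phi> S T = {R. R \<subseteq> Ed \<and> bd R - T = S \<and>
      (\<forall>R'. R' \<subseteq> Ed \<and> bd R' - T = S \<longrightarrow> chain_weight \<phi> R \<le> chain_weight \<phi> R')}"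

definition parity :: "edge set \<Rightarrow> edge set \<Rightarrow> nat" where
  "parity \<Gamma> E = card (E \<inter> \<Gamma>) mod 2"

definition correctable :: "edge set \<Rightarrow> (edge \<Rightarrow> real) \<Rightarrow> vtx set \<Rightarrow> edge set \<Rightarrow> edge set \<Rightarrow> bool" where
  "correctable Ed \<phi> T \<Gamma> E = (\<forall>R \<in> Cmin Ed \<phi> (bd E - T) T. parity \<Gamma> R = parity \<Gamma> E)"

definition uncorrectable :: "edge set \<Rightarrow> (edge \<Rightarrow> real) \<Rightarrow> vtx set \<Rightarrow> edge set \<Rightarrow> edge set \<Rightarrow> bool" where
  "uncorrectable Ed \<phi> T \<Gamma> E = (\<not> correctable Ed \<phi> T \<Gamma> E)"

text \<open>The block consists of the s x s plaquettes with lower-left corners (i,j),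
  a \<le> i < a+s, b \<le> j < b+s.\<close>

definition hE :: "int \<Rightarrow> int \<Rightarrow> edge" where "hE i j = {(i,j), (i+1,j)}"
definition vE :: "int \<Rightarrow> int \<Rightarrow> edge" where "vE i j = {(i,j), (i,j+1)}"

definition lat_vertices :: "int \<Rightarrow> int \<Rightarrow> int \<Rightarrow> int \<Rightarrow> int \<Rightarrow> vtx set" where
  "lat_vertices m n a b s = {(i,j). 0 \<le> i \<and> i \<le> m \<and> 0 \<le> j \<and> j \<le> n \<and>
       \<not> (a < i \<and> i < a+s \<and> b < j \<and> j < b+s)}"

text \<open>Edges kept: those whose midpoint is not strictly inside the block.\<close>
definition lat_edges :: "int \<Rightarrow> int \<Rightarrow> int \<Rightarrow> int \<Rightarrow> int \<Rightarrow> edge set" where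
  "lat_edges m n a b s =
     {hE i j | i j. 0 \<le> i \<and> i < m \<and> 0 \<le> j \<and> j \<le> n \<and>
         \<not> (a \<le> i \<and> i < a+s \<and> b < j \<and> j < b+s)} \<union>
     {vE i j | i j. 0 \<le> i \<and> i \<le> m \<and> 0 \<le> j \<and> j < n \<and>
         \<not> (a < i \<and> i < a+s \<and> b \<le> j \<and> j < b+s)}"

datatype face = Plaq int int | Defect | Outer

definition lat_faces :: "int \<Rightarrow> int \<Rightarrow> int \<Rightarrow> int \<Rightarrow> int \<Rightarrow> face set" where
  "lat_faces m n a b s = {Plaq i j | i j. 0 \<le> i \<and> i < m \<and> 0 \<le> j \<and> j < n \<and>
       \<not> (a \<le> i \<and> i < a+s \<and> b \<le> j \<and> j < b+s)} \<union> {Defect, Outer}"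

fun face_edges :: "int \<Rightarrow> int \<Rightarrow> int \<Rightarrow> int \<Rightarrow> int \<Rightarrow> face \<Rightarrow> edge set" where
  "face_edges m n a b s (Plaq i j) = {hE i j, hE i (j+1), vE i j, vE (i+1) j}"
| "face_edges m n a b s Defect =
     {hE i b | i. a \<le> i \<and> i < a+s} \<union> {hE i (b+s) | i. a \<le> i \<and> i < a+s} \<union>
     {vE a j | j. b \<le> j \<and> j < b+s} \<union> {vE (a+s) j | j. b \<le> j \<and> j < b+s}"
| "face_edges m n a b s Outer =
     {hE i 0 | i. 0 \<le> i \<and> i < m} \<union> {hE i n | i. 0 \<le> i \<and> i < m} \<union>
     {vE 0 j | j. 0 \<le> j \<and> j < n} \<union> {vE m j | j. 0 \<le> j \<and> j < n}"

text \<open>The set of crossed edges is set es.\<close>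
definition dual_path :: "int \<Rightarrow> int \<Rightarrow> int \<Rightarrow> int \<Rightarrow> int \<Rightarrow> face list \<Rightarrow> edge list \<Rightarrow> bool" where
  "dual_path m n a b s fs es \<longleftrightarrow>
     fs \<noteq> [] \<and> hd fs = Defect \<and> last fs = Outer \<and> distinct fs \<and>
     set fs \<subseteq> lat_faces m n a b s \<and> length es + 1 = length fs \<and>
     (\<forall>k < length es. es ! k \<in> lat_edges m n a b s \<and>
        es ! k \<in> face_edges m n a b s (fs ! k) \<and>
        es ! k \<in> face_edges m n a b s (fs ! Suc k))"

end

theory Submission
  imports Defs
begin

lemma oddsym:
  assumes "finite A" "finite B"
  shows "odd (card (symdiff A B \<inter> G)) \<longleftrightarrow> (odd (card (A \<inter> G)) \<noteq> odd (card (B \<inter> G)))"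
proof -
  have e: "symdiff A B \<inter> G = (A \<inter> G - B \<inter> G) \<union> (B \<inter> G - A \<inter> G)" by (auto simp: symdiff_def)
  have fa: "finite (A \<inter> G)" "finite (B \<inter> G)" using assms by auto
  have c: "card (symdiff A B \<inter> G) = card (A \<inter> G - B \<inter> G) + card (B \<inter> G - A \<inter> G)"
    unfolding e by (rule card_Un_disjoint) (use fa in auto)
  have c1': "card (A \<inter> G - B \<inter> G) = card (A \<inter> G) - card (A \<inter> B \<inter> G)"
  proof -
    have "A \<inter> G - B \<inter> G = A \<inter> G - A \<inter> B \<inter> G" by auto
    moreover have "A \<inter> B \<inter> G \<subseteq> A \<inter> G" by auto
    ultimately show ?thesis using fa by (metis card_Diff_subset finite_subset)
  qed
  have c2: "card (B \<inter> G - A \<inter> G) = card (B \<inter> G) - card (A \<inter> B \<inter> G)"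
  proof -
    have "B \<inter> G - A \<inter> G = B \<inter> G - A \<inter> B \<inter> G" by auto
    moreover have "A \<inter> B \<inter> G \<subseteq> B \<inter> G" by auto
    ultimately show ?thesis using fa by (metis card_Diff_subset finite_subset)
  qed
  have l1: "card (A \<inter> B \<inter> G) \<le> card (A \<inter> G)" using fa by (intro card_mono) auto
  have l2: "card (A \<inter> B \<inter> G) \<le> card (B \<inter> G)" using fa by (intro card_mono) auto
  obtain p where p: "card (A \<inter> G) = card (A \<inter> B \<inter> G) + p" using l1 le_Suc_ex by blast
  obtain q where q: "card (B \<inter> G) = card (A \<inter> B \<inter> G) + q" using l2 le_Suc_ex by blast
  show ?thesis unfolding c c1' c2 p q by auto
qed

lemma bd_symdiff:
  assumes "finite A" "finite B"
  shows "bd (symdiff A B) = symdiff (bd A) (bd B)"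
proof (rule set_eqI)
  fix v :: vtx
  have eq: "\<And>X. {e \<in> X. v \<in> e} = X \<inter> {e. v \<in> e}" by auto
  have "odd (card (symdiff A B \<inter> {e. v \<in> e})) \<longleftrightarrow> (odd (card (A \<inter> {e. v \<in> e})) \<noteq> odd (card (B \<inter> {e. v \<in> e})))"
    by (rule oddsym[OF assms])
  then have "v \<in> bd (symdiff A B) \<longleftrightarrow> ((v \<in> bd A) \<noteq> (v \<in> bd B))"
    unfolding bd_def mem_Collect_eq eq .
  then show "v \<in> bd (symdiff A B) \<longleftrightarrow> v \<in> symdiff (bd A) (bd B)"
    unfolding symdiff_def by blast
qed

lemma bd_empty[simp]: "bd {} = {}" by (simp add: bd_def)

lemma bd_single: "bd {e} = e"
proof -
  have "\<And>v. {x \<in> {e}. v \<in> x} = (if v \<in> e then {e} else {})" by auto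
  then show ?thesis unfolding bd_def by auto
qed

lemma unc_iff:
  assumes "0 < w"
  shows "uncorrectable Ed (\<lambda>_. w) {} G X \<longleftrightarrow> (\<exists>R. R \<subseteq> Ed \<and> bd R = bd X \<and>
     (odd (card (R \<inter> G)) \<noteq> odd (card (X \<inter> G))) \<and>
     (\<forall>R'. R' \<subseteq> Ed \<and> bd R' = bd X \<longrightarrow> card R \<le> card R'))"
proof -
  have p: "\<And>A B. (parity G A \<noteq> parity G B) \<longleftrightarrow> (odd (card (A \<inter> G)) \<noteq> odd (card (B \<inter> G)))"
    unfolding parity_def by (auto simp: odd_iff_mod_2_eq_one even_iff_mod_2_eq_zero)
  have q: "\<And>A B. chain_weight (\<lambda>_. w) A \<le> chain_weight (\<lambda>_. w) B \<longleftrightarrow> card A \<le> card B"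
    unfolding chain_weight_def using assms by simp
  show ?thesis unfolding uncorrectable_def correctable_def Cmin_def using p q by auto
qed

lemma symdiff_cancel: "symdiff (symdiff Y A) (symdiff Y B) = symdiff A B"
  by (auto simp: symdiff_def)
lemma symdiff_assoc: "symdiff (symdiff A B) C = symdiff A (symdiff B C)"
  by (auto simp: symdiff_def)
lemma symdiff_self: "symdiff Y (symdiff Y A) = A"
  by (auto simp: symdiff_def)
lemma symdiff_insert: "e \<notin> A \<Longrightarrow> symdiff (symdiff Y A) (symdiff Y (insert e A)) = {e}"
  by (auto simp: symdiff_def)

lemma hE_inj[simp]: "hE i j = hE i' j' \<longleftrightarrow> i = i' \<and> j = j'"
  unfolding hE_def by (auto simp: doubleton_eq_iff)
lemma vE_inj[simp]: "vE i j = vE i' j' \<longleftrightarrow> i = i' \<and> j = j'"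
  unfolding vE_def by (auto simp: doubleton_eq_iff)
lemma hE_vE[simp]: "hE i j \<noteq> vE i' j'" "vE i' j' \<noteq> hE i j"
  unfolding vE_def hE_def by (auto simp: doubleton_eq_iff)
lemma mem_hE[simp]: "v \<in> hE i j \<longleftrightarrow> v = (i,j) \<or> v = (i+1,j)" by (auto simp: hE_def)
lemma mem_vE[simp]: "v \<in> vE i j \<longleftrightarrow> v = (i,j) \<or> v = (i,j+1)" by (auto simp: vE_def)



definition chainA :: "(int \<times> int) set \<Rightarrow> edge set" where
  "chainA A = {hE i j | i j. ((i,j) \<in> A) \<noteq> ((i,j-1) \<in> A)} \<union> {vE i j | i j. ((i,j) \<in> A) \<noteq> ((i-1,j) \<in> A)}"

lemma hE_chainA[simp]: "hE i j \<in> chainA A \<longleftrightarrow> (((i,j) \<in> A) \<noteq> ((i,j-1) \<in> A))"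
  unfolding chainA_def by auto
lemma vE_chainA[simp]: "vE i j \<in> chainA A \<longleftrightarrow> (((i,j) \<in> A) \<noteq> ((i-1,j) \<in> A))"
  unfolding chainA_def by auto
lemma chainA_cases: "e \<in> chainA A \<Longrightarrow> (\<exists>i j. e = hE i j) \<or> (\<exists>i j. e = vE i j)"
  unfolding chainA_def by auto

lemma edge_ext:
  assumes "\<And>e. e \<in> X \<Longrightarrow> (\<exists>i j. e = hE i j) \<or> (\<exists>i j. e = vE i j)"
    and "\<And>e. e \<in> Y \<Longrightarrow> (\<exists>i j. e = hE i j) \<or> (\<exists>i j. e = vE i j)"
    and "\<And>i j. hE i j \<in> X \<longleftrightarrow> hE i j \<in> Y"
    and "\<And>i j. vE i j \<in> X \<longleftrightarrow> vE i j \<in> Y"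
  shows "X = Y"
proof (rule set_eqI)
  fix e show "e \<in> X \<longleftrightarrow> e \<in> Y"
  proof (cases "e \<in> X \<or> e \<in> Y")
    case True
    then have "(\<exists>i j. e = hE i j) \<or> (\<exists>i j. e = vE i j)" using assms(1,2) by blast
    then show ?thesis using assms(3,4) by auto
  next
    case False then show ?thesis by blast
  qed
qed

lemma symdiff_cases: "e \<in> symdiff X Y \<Longrightarrow> e \<in> X \<or> e \<in> Y"
  by (auto simp: symdiff_def)

lemma chainA_symdiff: "chainA (symdiff A B) = symdiff (chainA A) (chainA B)"
  apply (rule edge_ext)
  apply (meson chainA_cases)
  apply (meson chainA_cases symdiff_cases)
  apply (auto simp: symdiff_def)
  done

lemma chainA_single: "chainA {(i,j)} = {hE i j, vE i j, hE i (j+1), vE (i+1) j}"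
  apply (rule edge_ext)
  apply (meson chainA_cases)
  apply blast
  apply auto
  done

lemma chainA_empty[simp]: "chainA {} = {}"
  unfolding chainA_def by auto

locale lat =
  fixes m n a b s :: int and w :: real and fs :: "face list" and es :: "edge list"
  assumes s1: "1 \<le> s" and a1: "1 \<le> a" and b1: "1 \<le> b" and am: "a + s \<le> m - 1"
    and bn: "b + s \<le> n - 1" and w0: "0 < w" and dp: "dual_path m n a b s fs es"
begin

abbreviation L where "L \<equiv> lat_edges m n a b s"
abbreviation par where "par X \<equiv> odd (card (X \<inter> set es))"
abbreviation good where "good X \<equiv> X \<subseteq> L \<and> uncorrectable L (\<lambda>_. w) {} (set es) X"
definition realP where "realP = {(i,j). 0 \<le> i \<and> i < m \<and> 0 \<le> j \<and> j < n \<and> \<not> (a \<le> i \<and> i < a+s \<and> b \<le> j \<and> j < b+s)}"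

lemma hE_L[simp]: "hE i j \<in> L \<longleftrightarrow> 0 \<le> i \<and> i < m \<and> 0 \<le> j \<and> j \<le> n \<and> \<not> (a \<le> i \<and> i < a+s \<and> b < j \<and> j < b+s)"
  unfolding lat_edges_def by auto
lemma vE_L[simp]: "vE i j \<in> L \<longleftrightarrow> 0 \<le> i \<and> i \<le> m \<and> 0 \<le> j \<and> j < n \<and> \<not> (a < i \<and> i < a+s \<and> b \<le> j \<and> j < b+s)"
  unfolding lat_edges_def by auto
lemma L_cases: "e \<in> L \<Longrightarrow> (\<exists>i j. e = hE i j) \<or> (\<exists>i j. e = vE i j)"
  unfolding lat_edges_def by auto

lemma finite_L: "finite L"
proof -
  have "L \<subseteq> (\<lambda>(i,j). hE i j) ` ({0..m} \<times> {0..n}) \<union> (\<lambda>(i,j). vE i j) ` ({0..m} \<times> {0..n})"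
    unfolding lat_edges_def by force
  then show ?thesis by (rule finite_subset) auto
qed

lemma finite_sub: "X \<subseteq> L \<Longrightarrow> finite X"
  using finite_L finite_subset by blast

end

definition hh :: "edge set \<Rightarrow> int \<Rightarrow> int \<Rightarrow> bool" where
  "hh C i j = odd (card {k \<in> {0..i}. vE k j \<in> C})"

lemma hh_neg: "i < 0 \<Longrightarrow> \<not> hh C i j"
  unfolding hh_def by simp

lemma hh_step: assumes "0 \<le> i" shows "hh C i j \<longleftrightarrow> (hh C (i-1) j \<noteq> (vE i j \<in> C))"
proof -
  let ?S = "{k \<in> {0..i-1}. vE k j \<in> C}"
  have fin: "finite ?S" by (rule finite_subset[of _ "{0..i-1}"]) auto
  have ni: "i \<notin> ?S" by simp
  have "{k \<in> {0..i}. vE k j \<in> C} = (if vE i j \<in> C then insert i ?S else ?S)"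
    using assms by (force simp: le_less)
  then show ?thesis unfolding hh_def using fin ni by auto
qed

lemma card4:
  assumes "p \<noteq> q" "p \<noteq> r" "p \<noteq> t" "q \<noteq> r" "q \<noteq> t" "r \<noteq> t"
  shows "odd (card (C \<inter> {p,q,r,t})) \<longleftrightarrow> ((p \<in> C) \<noteq> ((q \<in> C) \<noteq> ((r \<in> C) \<noteq> (t \<in> C))))"
  using assms
  by (cases "p \<in> C"; cases "q \<in> C"; cases "r \<in> C"; cases "t \<in> C"; simp add: Int_insert_right card_insert_if)

context lat begin

lemma deg4:
  assumes C: "C \<subseteq> L" "bd C = {}"
  shows "\<not> ((hE (i-1) j \<in> C) \<noteq> ((hE i j \<in> C) \<noteq> ((vE i (j-1) \<in> C) \<noteq> (vE i j \<in> C))))"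
proof -
  have eq: "{e \<in> C. (i,j) \<in> e} = C \<inter> {hE (i-1) j, hE i j, vE i (j-1), vE i j}"
  proof (rule set_eqI)
    fix e show "e \<in> {e \<in> C. (i,j) \<in> e} \<longleftrightarrow> e \<in> C \<inter> {hE (i-1) j, hE i j, vE i (j-1), vE i j}"
    proof (cases "e \<in> C")
      case True
      then have "(\<exists>i j. e = hE i j) \<or> (\<exists>i j. e = vE i j)" using C(1) L_cases by blast
      then show ?thesis using True by (elim disjE exE) auto
    qed simp
  qed
  have "(i,j) \<notin> bd C" using C(2) by simp
  then have "\<not> odd (card {e \<in> C. (i,j) \<in> e})" unfolding bd_def by simp
  then have "\<not> odd (card (C \<inter> {hE (i-1) j, hE i j, vE i (j-1), vE i j}))" using eq by metis
  moreover have "odd (card (C \<inter> {hE (i-1) j, hE i j, vE i (j-1), vE i j})) \<longleftrightarrow>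
    ((hE (i-1) j \<in> C) \<noteq> ((hE i j \<in> C) \<noteq> ((vE i (j-1) \<in> C) \<noteq> (vE i j \<in> C))))"
    by (rule card4) simp_all
  ultimately show ?thesis by simp
qed

lemma vE_iff:
  assumes C: "C \<subseteq> L"
  shows "vE i j \<in> C \<longleftrightarrow> (hh C i j \<noteq> hh C (i-1) j)"
proof (cases "0 \<le> i")
  case True then show ?thesis using hh_step[OF True, of C j] by auto
next
  case False
  then have "vE i j \<notin> C" using C by auto
  then show ?thesis using False hh_neg by auto
qed

lemma hE_iff_aux:
  assumes C: "C \<subseteq> L" "bd C = {}"
  shows "\<forall>j. hE (int k - 1) j \<in> C \<longleftrightarrow> (hh C (int k - 1) j \<noteq> hh C (int k - 1) (j-1))"
proof (induction k)
  case 0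
  have "\<And>j. hE (-1) j \<notin> C" using C by auto
  then show ?case using hh_neg by auto
next
  case (Suc k)
  define i where "i = int k"
  have i0: "0 \<le> i" unfolding i_def by simp
  have ik: "int (Suc k) - 1 = i" unfolding i_def by simp
  show ?case unfolding ik
  proof
    fix j
    have IH: "hE (i - 1) j \<in> C \<longleftrightarrow> (hh C (i - 1) j \<noteq> hh C (i - 1) (j-1))"
      using Suc.IH unfolding i_def by blast
    have s1: "hh C i j \<longleftrightarrow> (hh C (i-1) j \<noteq> (vE i j \<in> C))" by (rule hh_step[OF i0])
    have s2: "hh C i (j-1) \<longleftrightarrow> (hh C (i-1) (j-1) \<noteq> (vE i (j-1) \<in> C))" by (rule hh_step[OF i0])
    have d: "\<not> ((hE (i-1) j \<in> C) \<noteq> ((hE i j \<in> C) \<noteq> ((vE i (j-1) \<in> C) \<noteq> (vE i j \<in> C))))"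
      by (rule deg4[OF C])
    show "hE i j \<in> C \<longleftrightarrow> (hh C i j \<noteq> hh C i (j-1))"
      using IH s1 s2 d
      by (cases "hE i j \<in> C"; cases "vE i j \<in> C"; cases "vE i (j-1) \<in> C"; cases "hh C (i-1) j"; cases "hh C (i-1) (j-1)"; simp)
  qed
qed

lemma hE_iff:
  assumes C: "C \<subseteq> L" "bd C = {}"
  shows "hE i j \<in> C \<longleftrightarrow> (hh C i j \<noteq> hh C i (j-1))"
proof (cases "i < -1")
  case True
  then have "hE i j \<notin> C" using C by auto
  then show ?thesis using True hh_neg by auto
next
  case False
  then have "i = int (nat (i+1)) - 1" by simp
  then show ?thesis using hE_iff_aux[OF C, of "nat (i+1)"] by metis
qed

lemma C_chainA:
  assumes C: "C \<subseteq> L" "bd C = {}"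
  shows "C = chainA {(i,j). hh C i j}"
  apply (rule edge_ext)
  using C(1) L_cases apply blast
  apply (meson chainA_cases)
  using hE_iff[OF C] vE_iff[OF C(1)] by auto

lemma hh_outj:
  assumes C: "C \<subseteq> L" and "j < 0 \<or> n \<le> j"
  shows "\<not> hh C i j"
proof -
  have e0: "{k \<in> {0..i}. vE k j \<in> C} = {}" using C assms(2) by auto
  show ?thesis unfolding hh_def e0 by simp
qed

lemma hh_right:
  assumes C: "C \<subseteq> L" "bd C = {}" and "m \<le> i"
  shows "\<not> hh C i j"
proof -
  have aux: "\<not> hh C i (int k - 1)" for k
  proof (induction k)
    case 0 then show ?case using hh_outj[OF C(1)] by simp
  next
    case (Suc k)
    have "hE i (int k) \<notin> C" using C(1) assms(3) by auto
    then have "hh C i (int k) = hh C i (int k - 1)" using hE_iff[OF C] by blast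
    then show ?case using Suc by simp
  qed
  show ?thesis
  proof (cases "j < 0")
    case True then show ?thesis using hh_outj[OF C(1)] by simp
  next
    case False
    then have "j = int (nat (j+1)) - 1" by simp
    then show ?thesis using aux by metis
  qed
qed

lemma hh_rect:
  assumes C: "C \<subseteq> L" "bd C = {}" and h: "hh C i j"
  shows "0 \<le> i \<and> i < m \<and> 0 \<le> j \<and> j < n"
proof -
  have "0 \<le> i" using h hh_neg by force
  moreover have "i < m" using hh_right[OF C] h by (meson not_less)
  moreover have "0 \<le> j \<and> j < n"
  proof (rule ccontr)
    assume "\<not> (0 \<le> j \<and> j < n)"
    then have "\<not> hh C i j" using hh_outj[OF C(1)] by auto
    then show False using h by simp
  qed
  ultimately show ?thesis by blast
qed

lemma hh_block:
  assumes C: "C \<subseteq> L" "bd C = {}" and "a \<le> i" "i < a+s" "b \<le> j" "j < b+s"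
  shows "hh C i j = hh C a b"
proof -
  have row: "a + int k < a + s \<longrightarrow> hh C (a + int k) j = hh C a j" for k
  proof (induction k)
    case (Suc k)
    show ?case
    proof
      assume lt: "a + int (Suc k) < a + s"
      have "vE (a + int (Suc k)) j \<notin> C" using C(1) assms(5,6) lt by auto
      then have "hh C (a + int (Suc k)) j = hh C (a + int (Suc k) - 1) j" using vE_iff[OF C(1)] by blast
      then show "hh C (a + int (Suc k)) j = hh C a j" using Suc lt by simp
    qed
  qed simp
  have col: "b + int k < b + s \<longrightarrow> hh C a (b + int k) = hh C a b" for k
  proof (induction k)
    case (Suc k)
    show ?case
    proof
      assume lt: "b + int (Suc k) < b + s"
      have "hE a (b + int (Suc k)) \<notin> C" using C(1) s1 lt by auto
      then have "hh C a (b + int (Suc k)) = hh C a (b + int (Suc k) - 1)" using hE_iff[OF C] by blast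
      then show "hh C a (b + int (Suc k)) = hh C a b" using Suc lt by simp
    qed
  qed simp
  have i: "i = a + int (nat (i - a))" using assms by simp
  have j: "j = b + int (nat (j - b))" using assms by simp
  show ?thesis using row[of "nat (i-a)"] col[of "nat (j-b)"] i j assms by metis
qed

end

lemma hE_Defect[simp]: "hE x y \<in> face_edges m n a b s Defect \<longleftrightarrow> a \<le> x \<and> x < a+s \<and> (y = b \<or> y = b+s)"
  by auto
lemma vE_Defect[simp]: "vE x y \<in> face_edges m n a b s Defect \<longleftrightarrow> b \<le> y \<and> y < b+s \<and> (x = a \<or> x = a+s)"
  by auto
lemma hE_Outer[simp]: "hE x y \<in> face_edges m n a b s Outer \<longleftrightarrow> 0 \<le> x \<and> x < m \<and> (y = 0 \<or> y = n)"
  by auto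
lemma vE_Outer[simp]: "vE x y \<in> face_edges m n a b s Outer \<longleftrightarrow> 0 \<le> y \<and> y < n \<and> (x = 0 \<or> x = m)"
  by auto
lemma fe_cases: "e \<in> face_edges m n a b s f \<Longrightarrow> (\<exists>i j. e = hE i j) \<or> (\<exists>i j. e = vE i j)"
  by (cases f) auto

context lat begin

abbreviation F where "F \<equiv> lat_faces m n a b s"
abbreviation fe where "fe \<equiv> face_edges m n a b s"

lemma Plaq_F[simp]: "Plaq i j \<in> F \<longleftrightarrow> (i,j) \<in> realP"
  unfolding lat_faces_def realP_def by auto

lemma hE_faces:
  assumes "f \<in> F" "hE x y \<in> fe f"
  shows "f = Plaq x y \<or> f = Plaq x (y-1) \<or> f = Defect \<or> f = Outer"
  using assms by (cases f) auto

lemma vE_faces: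
  assumes "f \<in> F" "vE x y \<in> fe f"
  shows "f = Plaq x y \<or> f = Plaq (x-1) y \<or> f = Defect \<or> f = Outer"
  using assms by (cases f) auto

lemma hE_DO: "\<not> (hE x y \<in> fe Defect \<and> hE x y \<in> fe Outer)"
  using s1 b1 bn by auto
lemma vE_DO: "\<not> (vE x y \<in> fe Defect \<and> vE x y \<in> fe Outer)"
  using s1 a1 am by auto
lemma hE_PP: "hE x y \<in> fe Defect \<or> hE x y \<in> fe Outer \<Longrightarrow> \<not> (Plaq x y \<in> F \<and> Plaq x (y-1) \<in> F)"
  using s1 b1 bn a1 am by (auto simp: realP_def)
lemma vE_PP: "vE x y \<in> fe Defect \<or> vE x y \<in> fe Outer \<Longrightarrow> \<not> (Plaq x y \<in> F \<and> Plaq (x-1) y \<in> F)"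
  using s1 b1 bn a1 am by (auto simp: realP_def)

lemma at_most_2:
  assumes "e \<in> L" "f1 \<in> F" "f2 \<in> F" "f3 \<in> F" "e \<in> fe f1" "e \<in> fe f2" "e \<in> fe f3"
    "f1 \<noteq> f2" "f1 \<noteq> f3" "f2 \<noteq> f3"
  shows False
proof -
  from L_cases[OF assms(1)] obtain x y where "e = hE x y \<or> e = vE x y" by blast
  then show False
  proof
    assume e: "e = hE x y"
    note c = hE_faces[OF assms(2) assms(5)[unfolded e]] hE_faces[OF assms(3) assms(6)[unfolded e]]
      hE_faces[OF assms(4) assms(7)[unfolded e]]
    have "Defect \<in> {f1,f2,f3} \<or> Outer \<in> {f1,f2,f3}" using c assms(8-10) by blast
    then have h1: "hE x y \<in> fe Defect \<or> hE x y \<in> fe Outer" using assms(5-7) e by blast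
    have "\<not> (Defect \<in> {f1,f2,f3} \<and> Outer \<in> {f1,f2,f3})" using hE_DO assms(5-7) e by blast
    then have "Plaq x y \<in> {f1,f2,f3} \<and> Plaq x (y-1) \<in> {f1,f2,f3}" using c assms(8-10) by blast
    then show False using hE_PP[OF h1] assms(2-4) by (auto simp del: Plaq_F)
  next
    assume e: "e = vE x y"
    note c = vE_faces[OF assms(2) assms(5)[unfolded e]] vE_faces[OF assms(3) assms(6)[unfolded e]]
      vE_faces[OF assms(4) assms(7)[unfolded e]]
    have "Defect \<in> {f1,f2,f3} \<or> Outer \<in> {f1,f2,f3}" using c assms(8-10) by blast
    then have h1: "vE x y \<in> fe Defect \<or> vE x y \<in> fe Outer" using assms(5-7) e by blast
    have "\<not> (Defect \<in> {f1,f2,f3} \<and> Outer \<in> {f1,f2,f3})" using vE_DO assms(5-7) e by blast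
    then have "Plaq x y \<in> {f1,f2,f3} \<and> Plaq (x-1) y \<in> {f1,f2,f3}" using c assms(8-10) by blast
    then show False using vE_PP[OF h1] assms(2-4) by (auto simp del: Plaq_F)
  qed
qed

end
context lat begin

abbreviation N where "N \<equiv> length es"

lemma lenfs: "length fs = N + 1" using dp unfolding dual_path_def by simp
lemma fs0: "fs ! 0 = Defect" using dp unfolding dual_path_def by (metis hd_conv_nth)
lemma fsN: "fs ! N = Outer"
proof -
  have "fs \<noteq> []" "last fs = Outer" using dp unfolding dual_path_def by auto
  then show ?thesis using lenfs by (simp add: last_conv_nth)
qed
lemma dist: "distinct fs" using dp unfolding dual_path_def by simp
lemma N1: "1 \<le> N"
proof (rule ccontr)
  assume "\<not> 1 \<le> N" then have "N = 0" by arith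
  then have "fs ! N = fs ! 0" by simp
  then show False using fs0 fsN by simp
qed
lemma fsF: "k \<le> N \<Longrightarrow> fs ! k \<in> F"
  using dp lenfs unfolding dual_path_def by (metis less_Suc_eq_le nth_mem subsetD Suc_eq_plus1)
lemma esP: "k < N \<Longrightarrow> es ! k \<in> L \<and> es ! k \<in> fe (fs ! k) \<and> es ! k \<in> fe (fs ! Suc k)"
  using dp unfolding dual_path_def by blast
lemma fs_eq: "k \<le> N \<Longrightarrow> k' \<le> N \<Longrightarrow> fs ! k = fs ! k' \<longleftrightarrow> k = k'"
  using dist lenfs by (simp add: nth_eq_iff_index_eq)

lemma in_two:
  assumes "k < N" "f \<in> F" "es ! k \<in> fe f"
  shows "f = fs ! k \<or> f = fs ! Suc k"
proof (rule ccontr)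
  assume "\<not> ?thesis"
  moreover have "fs ! k \<noteq> fs ! Suc k" using fs_eq assms(1) by simp
  moreover have "fs ! k \<in> F" "fs ! Suc k \<in> F" using fsF assms(1) by auto
  ultimately show False using at_most_2[of "es ! k" "fs ! k" "fs ! Suc k" f] esP[OF assms(1)] assms
    by blast
qed

lemma G_fe:
  assumes "f \<in> F"
  shows "fe f \<inter> set es = {es ! k | k. k < N \<and> (f = fs ! k \<or> f = fs ! Suc k)}"
proof (rule set_eqI)
  fix e
  show "e \<in> fe f \<inter> set es \<longleftrightarrow> e \<in> {es ! k | k. k < N \<and> (f = fs ! k \<or> f = fs ! Suc k)}"
  proof
    assume "e \<in> fe f \<inter> set es"
    then obtain k where k: "k < N" "e = es ! k" "e \<in> fe f" by (auto simp: in_set_conv_nth)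
    then show "e \<in> {es ! k | k. k < N \<and> (f = fs ! k \<or> f = fs ! Suc k)}"
      using in_two[OF k(1) assms] by blast
  next
    assume "e \<in> {es ! k | k. k < N \<and> (f = fs ! k \<or> f = fs ! Suc k)}"
    then obtain k where k: "k < N" "e = es ! k" "f = fs ! k \<or> f = fs ! Suc k" by blast
    then show "e \<in> fe f \<inter> set es" using esP[OF k(1)] by auto
  qed
qed

lemma defect_odd: "odd (card (fe Defect \<inter> set es))"
proof -
  have "{es ! k | k. k < N \<and> (Defect = fs ! k \<or> Defect = fs ! Suc k)} = {es ! 0}"
  proof -
    have iff: "\<And>k. k < N \<Longrightarrow> (Defect = fs ! k \<or> Defect = fs ! Suc k) \<longleftrightarrow> k = 0"
      using fs_eq fs0 by (metis Suc_leI less_imp_le_nat nat.distinct(1) le0)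
    have "0 < N" using N1 by linarith
    then show ?thesis using iff fs0 by force
  qed
  then show ?thesis using G_fe[of Defect] unfolding lat_faces_def by simp
qed

lemma plaq_even:
  assumes "(i,j) \<in> realP"
  shows "even (card (fe (Plaq i j) \<inter> set es))"
proof (cases "Plaq i j \<in> set fs")
  case False
  have nk: "\<forall>k<N. Plaq i j \<noteq> fs ! k \<and> Plaq i j \<noteq> fs ! Suc k"
    using False lenfs by (metis Suc_eq_plus1 Suc_less_eq less_SucI nth_mem)
  have emp: "{es ! k | k. k < N \<and> (Plaq i j = fs ! k \<or> Plaq i j = fs ! Suc k)} = {}"
    using nk by blast
  have PF: "Plaq i j \<in> F" using assms by simp
  have e: "fe (Plaq i j) \<inter> set es = {}" using G_fe[OF PF] emp by metis
  show ?thesis unfolding e by simp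
next
  case True
  then obtain t where t: "t < N + 1" "fs ! t = Plaq i j" using lenfs by (auto simp: in_set_conv_nth)
  have t0: "t \<noteq> 0" using t fs0 by (metis face.distinct(1))
  have tN: "t \<noteq> N" using t fsN by auto
  have tl: "t < N" using t tN by simp
  have "\<And>k. k < N \<Longrightarrow> (Plaq i j = fs ! k \<or> Plaq i j = fs ! Suc k) \<longleftrightarrow> (k = t \<or> Suc k = t)"
  proof -
    fix k assume k: "k < N"
    have tle: "t \<le> N" using t by simp
    have "Plaq i j = fs ! k \<longleftrightarrow> k = t" using fs_eq[of k t] k tle t(2) by auto
    moreover have "Plaq i j = fs ! Suc k \<longleftrightarrow> Suc k = t" using fs_eq[of "Suc k" t] k tle t(2) by auto
    ultimately show "(Plaq i j = fs ! k \<or> Plaq i j = fs ! Suc k) \<longleftrightarrow> (k = t \<or> Suc k = t)" by blast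
  qed
  note iff = this
  have eq: "{es ! k | k. k < N \<and> (Plaq i j = fs ! k \<or> Plaq i j = fs ! Suc k)} = {es ! t, es ! (t - 1)}"
  proof (rule set_eqI)
    fix e
    show "e \<in> {es ! k | k. k < N \<and> (Plaq i j = fs ! k \<or> Plaq i j = fs ! Suc k)} \<longleftrightarrow> e \<in> {es ! t, es ! (t - 1)}"
    proof
      assume "e \<in> {es ! k | k. k < N \<and> (Plaq i j = fs ! k \<or> Plaq i j = fs ! Suc k)}"
      then obtain k where k: "k < N" "e = es ! k" "Plaq i j = fs ! k \<or> Plaq i j = fs ! Suc k" by blast
      then have "k = t \<or> Suc k = t" using iff by blast
      then have "k = t \<or> k = t - 1" by arith
      then show "e \<in> {es ! t, es ! (t - 1)}" using k by blast
    next
      assume "e \<in> {es ! t, es ! (t - 1)}"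
      then have "e = es ! t \<or> e = es ! (t - 1)" by blast
      moreover have "t - 1 < N" "Suc (t - 1) = t" using tl t0 by arith+
      ultimately show "e \<in> {es ! k | k. k < N \<and> (Plaq i j = fs ! k \<or> Plaq i j = fs ! Suc k)}"
        using iff tl by blast
    qed
  qed
  have ne: "es ! t \<noteq> es ! (t - 1)"
  proof
    assume h: "es ! t = es ! (t - 1)"
    have p1: "es ! (t-1) \<in> fe (fs ! (t-1))" "es ! (t-1) \<in> fe (fs ! Suc (t-1))" using esP[of "t-1"] tl by auto
    have p2: "es ! t \<in> fe (fs ! t)" "es ! t \<in> fe (fs ! Suc t)" "es ! t \<in> L" using esP[of t] tl by auto
    have d: "fs ! (t-1) \<noteq> fs ! t" "fs ! (t-1) \<noteq> fs ! Suc t" "fs ! t \<noteq> fs ! Suc t"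
      using fs_eq tl t0 by auto
    have F3: "fs ! (t-1) \<in> F" "fs ! t \<in> F" "fs ! Suc t \<in> F" using fsF tl by auto
    have q: "es ! t \<in> fe (fs ! (t-1))" using p1(1) h by simp
    show False using at_most_2[OF p2(3) F3 q p2(1) p2(2) d] .
  qed
  show ?thesis using G_fe[of "Plaq i j"] assms eq ne by simp
qed

end

lemma bd_plaq: "bd {hE i j, vE i j, hE i (j+1), vE (i+1) j} = {}"
proof -
  have eq: "{hE i j, vE i j, hE i (j+1), vE (i+1) j} =
     symdiff (symdiff (symdiff {hE i j} {vE i j}) {hE i (j+1)}) {vE (i+1) j}"
    by (auto simp: symdiff_def)
  have fs: "\<And>A B. finite A \<Longrightarrow> finite B \<Longrightarrow> finite (symdiff A B)" by (auto simp: symdiff_def)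
  have "bd {hE i j, vE i j, hE i (j+1), vE (i+1) j} =
      symdiff (symdiff (symdiff (hE i j) (vE i j)) (hE i (j+1))) (vE (i+1) j)"
    unfolding eq by (simp add: bd_symdiff bd_single fs)
  also have "\<dots> = {}" by (auto simp: symdiff_def hE_def vE_def)
  finally show ?thesis .
qed

lemma card_symdiff_le: "finite A \<Longrightarrow> finite B \<Longrightarrow> card (symdiff A B) \<le> card A + card B"
proof -
  assume f: "finite A" "finite B"
  have "card (symdiff A B) \<le> card (A \<union> B)" using f by (intro card_mono) (auto simp: symdiff_def)
  also have "\<dots> \<le> card A + card B" by (rule card_Un_le)
  finally show ?thesis .
qed

context lat begin

definition minc where "minc D \<longleftrightarrow> (\<forall>R'. R' \<subseteq> L \<and> bd R' = bd D \<longrightarrow> card D \<le> card R')"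

lemma goodZ:
  assumes Y: "Y \<subseteq> L" "bd Y = {}" "par Y" and D: "D \<subseteq> L" "minc D"
  shows "good (symdiff Y D)"
proof -
  have fY: "finite Y" and fD: "finite D" using Y D finite_sub by auto
  have sub: "symdiff Y D \<subseteq> L" using Y D by (auto simp: symdiff_def)
  have bdx: "bd (symdiff Y D) = bd D" using bd_symdiff[OF fY fD] Y by (simp add: symdiff_def)
  have px: "par (symdiff Y D) \<longleftrightarrow> \<not> par D" using oddsym[OF fY fD, of "set es"] Y by simp
  show ?thesis unfolding unc_iff[OF w0]
    using sub D bdx px unfolding minc_def by (intro conjI exI[of _ D]) auto
qed

lemma min_empty: "minc {}" unfolding minc_def by simp

lemma edge_ne: "e \<in> L \<Longrightarrow> e \<noteq> {}"
  using L_cases by (auto simp: hE_def vE_def)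

lemma min_single: assumes "e \<in> L" shows "minc {e}"
  unfolding minc_def
proof (intro allI impI)
  fix R' assume R': "R' \<subseteq> L \<and> bd R' = bd {e}"
  have "R' \<noteq> {}" using R' edge_ne[OF assms] by (auto simp: bd_single)
  moreover have "finite R'" using R' finite_sub by auto
  ultimately show "card {e} \<le> card R'" by (simp add: Suc_leI card_gt_0_iff)
qed

lemma min_pair: "minc {hE i j, vE i j}"
  unfolding minc_def
proof (intro allI impI)
  fix R' assume R': "R' \<subseteq> L \<and> bd R' = bd {hE i j, vE i j}"
  have eq: "{hE i j, vE i j} = symdiff {hE i j} {vE i j}" by (auto simp: symdiff_def)
  have bdp: "bd {hE i j, vE i j} = {(i+1,j),(i,j+1)}"
    unfolding eq by (simp add: bd_symdiff bd_single) (auto simp: symdiff_def)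
  have fR: "finite R'" using R' finite_sub by auto
  show "card {hE i j, vE i j} \<le> card R'"
  proof (rule ccontr)
    assume "\<not> ?thesis"
    then have "card R' < 2" by simp
    then have "card R' = 0 \<or> card R' = 1" by arith
    then show False
    proof
      assume "card R' = 0" then have "R' = {}" using fR by simp
      then show False using R' bdp by simp
    next
      assume "card R' = 1"
      then obtain e' where e': "R' = {e'}" by (auto simp: card_Suc_eq)
      then have "e' = {(i+1,j),(i,j+1)}" "e' \<in> L" using R' bdp by (auto simp: bd_single)
      then show False using L_cases[of e'] by (auto simp: hE_def vE_def doubleton_eq_iff)
    qed
  qed
qed

lemma plaq_sub: "(i,j) \<in> realP \<Longrightarrow> chainA {(i,j)} \<subseteq> L"
  unfolding chainA_single realP_def by auto

lemma plaq_par: "(i,j) \<in> realP \<Longrightarrow> \<not> par (chainA {(i,j)})"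
proof -
  assume r: "(i,j) \<in> realP"
  have "chainA {(i,j)} = fe (Plaq i j)" unfolding chainA_single by auto
  then show ?thesis using plaq_even[OF r] by simp
qed

lemma chain_props:
  assumes "finite A" "A \<subseteq> realP"
  shows "chainA A \<subseteq> L \<and> bd (chainA A) = {} \<and> \<not> par (chainA A)"
  using assms
proof (induction A rule: finite_induct)
  case empty then show ?case by simp
next
  case (insert p A)
  obtain i j where p: "p = (i,j)" by fastforce
  have ins: "insert p A = symdiff A {p}" using insert(2) by (auto simp: symdiff_def)
  have c: "chainA (insert p A) = symdiff (chainA A) (chainA {(i,j)})"
    by (metis ins p chainA_symdiff)
  have IH: "chainA A \<subseteq> L" "bd (chainA A) = {}" "\<not> par (chainA A)" using insert by auto
  have r: "(i,j) \<in> realP" using insert(4) p by auto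
  have s: "chainA {(i,j)} \<subseteq> L" by (rule plaq_sub[OF r])
  have f1: "finite (chainA A)" and f2: "finite (chainA {(i,j)})" using IH s finite_sub by auto
  have "symdiff (chainA A) (chainA {(i,j)}) \<subseteq> L" using IH s by (auto simp: symdiff_def)
  moreover have "bd (symdiff (chainA A) (chainA {(i,j)})) = {}"
    using bd_symdiff[OF f1 f2] IH bd_plaq[of i j] by (simp add: chainA_single symdiff_def)
  moreover have "\<not> par (symdiff (chainA A) (chainA {(i,j)}))"
    using oddsym[OF f1 f2] IH plaq_par[OF r] by simp
  ultimately show ?case unfolding c by blast
qed

inductive reach :: "edge set \<Rightarrow> edge set \<Rightarrow> bool" where
  rrefl: "good X \<Longrightarrow> reach X X"
| rstep: "reach X Y \<Longrightarrow> good Z \<Longrightarrow> card (symdiff Y Z) = 1 \<Longrightarrow> reach X Z"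

lemma reach_good: "reach X Y \<Longrightarrow> good X \<and> good Y"
  by (induction rule: reach.induct) auto

lemma reach_trans: "reach Y Z \<Longrightarrow> reach X Y \<Longrightarrow> reach X Z"
  by (induction rule: reach.induct) (auto intro: rstep)

lemma symdiff_comm: "symdiff A B = symdiff B A" by (auto simp: symdiff_def)

lemma reach_sym: "reach X Y \<Longrightarrow> reach Y X"
proof (induction rule: reach.induct)
  case (rrefl X) then show ?case by (rule reach.rrefl)
next
  case (rstep X Y Z)
  have "reach Z Y" using rstep reach_good[OF rstep(1)]
    by (metis reach.rrefl reach.rstep symdiff_comm)
  then show ?case using rstep(4) reach_trans by blast
qed

lemma reach_list:
  "reach X Y \<Longrightarrow> \<exists>Es. Es \<noteq> [] \<and> hd Es = X \<and> last Es = Y \<and> (\<forall>Z \<in> set Es. good Z) \<and>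
     (\<forall>i. Suc i < length Es \<longrightarrow> card (symdiff (Es ! i) (Es ! Suc i)) = 1)"
proof (induction rule: reach.induct)
  case (rrefl X)
  then show ?case by (intro exI[of _ "[X]"]) auto
next
  case (rstep X Y Z)
  then obtain Es where Es: "Es \<noteq> []" "hd Es = X" "last Es = Y" "\<forall>Z \<in> set Es. good Z"
    "\<forall>i. Suc i < length Es \<longrightarrow> card (symdiff (Es ! i) (Es ! Suc i)) = 1" by blast
  have "\<forall>i. Suc i < length (Es @ [Z]) \<longrightarrow> card (symdiff ((Es @ [Z]) ! i) ((Es @ [Z]) ! Suc i)) = 1"
  proof (intro allI impI)
    fix i assume i: "Suc i < length (Es @ [Z])"
    show "card (symdiff ((Es @ [Z]) ! i) ((Es @ [Z]) ! Suc i)) = 1"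
    proof (cases "Suc i < length Es")
      case True then show ?thesis using Es(5) by (simp add: nth_append)
    next
      case False
      then have si: "Suc i = length Es" using i by simp
      then have "Es ! i = Y" using Es(1,3) by (metis diff_Suc_1 last_conv_nth)
      then show ?thesis using si rstep(3) by (simp add: nth_append)
    qed
  qed
  then show ?case using Es rstep(2) by (intro exI[of _ "Es @ [Z]"]) auto
qed

end

lemma symdiff_back: "e \<notin> A \<Longrightarrow> symdiff Y A = symdiff (symdiff Y (insert e A)) {e}"
  by (auto simp: symdiff_def)

lemma finite_symdiff: "finite A \<Longrightarrow> finite B \<Longrightarrow> finite (symdiff A B)" by (auto simp: symdiff_def)

context lat begin

lemma cyc_good:
  assumes Y: "Y \<subseteq> L" "bd Y = {}" "par Y"
  shows "good Y"
  using goodZ[OF Y _ min_empty] by (simp add: symdiff_def)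

lemma step4:
  assumes Y: "Y \<subseteq> L" "bd Y = {}" "par Y" and r: "(i,j) \<in> realP"
  shows "reach Y (symdiff Y (chainA {(i,j)}))"
proof -
  define e1 e2 e3 e4 where "e1 = hE i j" "e2 = vE i j" "e3 = hE i (j+1)" "e4 = vE (i+1) j"
  define A1 A2 A3 A4 where "A1 = insert e1 {}" "A2 = insert e2 A1" "A3 = insert e3 A2" "A4 = insert e4 A3"
  have P: "chainA {(i,j)} = A4" unfolding chainA_single e1_e2_e3_e4_def A1_A2_A3_A4_def by auto
  have PL: "A4 \<subseteq> L" using plaq_sub[OF r] P by simp
  then have inL: "e1 \<in> L" "e2 \<in> L" "e3 \<in> L" "e4 \<in> L" unfolding A1_A2_A3_A4_def by auto
  have ne: "e2 \<notin> A1" "e3 \<notin> A2" "e4 \<notin> A3" "e1 \<notin> {}"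
    unfolding A1_A2_A3_A4_def e1_e2_e3_e4_def by auto
  have fY: "finite Y" using Y finite_sub by auto
  have fP: "finite A4" using PL finite_sub by auto
  define Y' where "Y' = symdiff Y A4"
  have Y'L: "Y' \<subseteq> L" unfolding Y'_def using Y PL by (auto simp: symdiff_def)
  have Y'bd: "bd Y' = {}" unfolding Y'_def using bd_symdiff[OF fY fP] Y bd_plaq[of i j] P
    by (simp add: chainA_single symdiff_def)
  have Y'par: "par Y'" unfolding Y'_def using oddsym[OF fY fP] Y plaq_par[OF r] P by simp
  have g0: "good (symdiff Y {})" using cyc_good[OF Y] by (simp add: symdiff_def)
  have g1: "good (symdiff Y A1)" using goodZ[OF Y _ min_single[OF inL(1)]] inL unfolding A1_A2_A3_A4_def by simp
  have g2: "good (symdiff Y A2)"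
  proof -
    have "A2 = {hE i j, vE i j}" unfolding A1_A2_A3_A4_def e1_e2_e3_e4_def by auto
    then show ?thesis using goodZ[OF Y _ min_pair[of i j]] inL unfolding e1_e2_e3_e4_def by simp
  qed
  have g3: "good (symdiff Y A3)"
  proof -
    have "symdiff Y A3 = symdiff Y' {e4}"
      unfolding Y'_def A1_A2_A3_A4_def(4) using symdiff_back[OF ne(3)] .
    then show ?thesis using goodZ[OF Y'L Y'bd Y'par _ min_single[OF inL(4)]] inL by simp
  qed
  have g4: "good (symdiff Y A4)" using cyc_good[OF Y'L Y'bd Y'par] unfolding Y'_def .
  have r0: "reach Y (symdiff Y {})" using g0 reach.rrefl by (simp add: symdiff_def)
  have r1: "reach Y (symdiff Y A1)"
    by (rule rstep[OF r0 g1]) (simp add: A1_A2_A3_A4_def symdiff_insert)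
  have r2: "reach Y (symdiff Y A2)"
    by (rule rstep[OF r1 g2]) (simp add: A1_A2_A3_A4_def(2) symdiff_insert ne)
  have r3: "reach Y (symdiff Y A3)"
    by (rule rstep[OF r2 g3]) (simp add: A1_A2_A3_A4_def(3) symdiff_insert ne)
  have r4: "reach Y (symdiff Y A4)"
    by (rule rstep[OF r3 g4]) (simp add: A1_A2_A3_A4_def(4) symdiff_insert ne)
  then show ?thesis using P by simp
qed

lemma path:
  assumes "finite A" "A \<subseteq> realP" and Y: "Y \<subseteq> L" "bd Y = {}" "par Y"
  shows "reach Y (symdiff Y (chainA A))"
  using assms(1,2)
proof (induction A rule: finite_induct)
  case empty
  then show ?case using reach.rrefl[OF cyc_good[OF Y]] by (simp add: symdiff_def)
next
  case (insert p A)
  obtain i j where p: "p = (i,j)" by fastforce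
  have IH: "reach Y (symdiff Y (chainA A))" using insert by auto
  have cp: "chainA A \<subseteq> L" "bd (chainA A) = {}" "\<not> par (chainA A)"
    using chain_props[OF insert(1)] insert(4) by auto
  have fY: "finite Y" and fc: "finite (chainA A)" using Y cp finite_sub by auto
  define Y' where "Y' = symdiff Y (chainA A)"
  have Y'L: "Y' \<subseteq> L" unfolding Y'_def using Y cp by (auto simp: symdiff_def)
  have Y'bd: "bd Y' = {}" unfolding Y'_def using bd_symdiff[OF fY fc] Y cp by (simp add: symdiff_def)
  have Y'par: "par Y'" unfolding Y'_def using oddsym[OF fY fc] Y cp by simp
  have r: "(i,j) \<in> realP" using insert(4) p by auto
  have s: "reach Y' (symdiff Y' (chainA {(i,j)}))" by (rule step4[OF Y'L Y'bd Y'par r])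
  have ins: "insert p A = symdiff A {p}" using insert(2) by (auto simp: symdiff_def)
  have "symdiff Y' (chainA {(i,j)}) = symdiff Y (chainA (insert p A))"
  proof -
    have c: "chainA (insert p A) = symdiff (chainA A) (chainA {(i,j)})" by (metis ins p chainA_symdiff)
    show ?thesis unfolding Y'_def c symdiff_assoc ..
  qed
  then show ?case using reach_trans[OF _ IH] s unfolding Y'_def by metis
qed

lemma blockD: "chainA {(i,j). a \<le> i \<and> i < a+s \<and> b \<le> j \<and> j < b+s} = fe Defect"
  apply (rule edge_ext)
  apply (meson chainA_cases)
  apply (meson fe_cases)
  using s1 by auto

lemma decomp:
  assumes C: "C \<subseteq> L" "bd C = {}" "\<not> par C"
  shows "\<exists>A. finite A \<and> A \<subseteq> realP \<and> C = chainA A"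
proof -
  define H where "H = {(i,j). hh C i j}"
  have CH: "C = chainA H" unfolding H_def by (rule C_chainA[OF C(1,2)])
  have Hr: "H \<subseteq> {0..<m} \<times> {0..<n}" unfolding H_def using hh_rect[OF C(1,2)] by auto
  have fH: "finite H" by (rule finite_subset[OF Hr]) simp
  define B where "B = {(i,j). a \<le> i \<and> i < a+s \<and> b \<le> j \<and> j < b+s}"
  show ?thesis
  proof (cases "hh C a b")
    case False
    have "H \<subseteq> realP"
    proof
      fix p assume p: "p \<in> H"
      obtain i j where ij: "p = (i,j)" by fastforce
      have h: "hh C i j" using p ij unfolding H_def by simp
      have "\<not> (a \<le> i \<and> i < a+s \<and> b \<le> j \<and> j < b+s)" using hh_block[OF C(1,2), of i j] h False by auto
      then show "p \<in> realP" using hh_rect[OF C(1,2) h] ij unfolding realP_def by simp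
    qed
    then show ?thesis using fH CH by blast
  next
    case True
    have BH: "B \<subseteq> H" unfolding B_def H_def using hh_block[OF C(1,2)] True by auto
    define A where "A = H - B"
    have HA: "H = symdiff A B" unfolding A_def using BH by (auto simp: symdiff_def)
    have Ar: "A \<subseteq> realP"
    proof
      fix p assume p: "p \<in> A"
      obtain i j where ij: "p = (i,j)" by fastforce
      have h: "hh C i j" using p ij unfolding A_def H_def by simp
      have "\<not> (a \<le> i \<and> i < a+s \<and> b \<le> j \<and> j < b+s)" using p ij unfolding A_def B_def by simp
      then show "p \<in> realP" using hh_rect[OF C(1,2) h] ij unfolding realP_def by simp
    qed
    have fA: "finite A" unfolding A_def using fH by simp
    have cp: "chainA A \<subseteq> L" "\<not> par (chainA A)" using chain_props[OF fA Ar] by auto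
    obtain D where D: "D = fe Defect" by blast
    have Dodd: "odd (card (D \<inter> set es))" using defect_odd D by simp
    have bD: "chainA B = D" unfolding B_def D by (rule blockD)
    have CB: "C = symdiff (chainA A) D" using CH HA chainA_symdiff[of A B] bD by simp
    have "D = symdiff (chainA A) C" unfolding CB by (auto simp: symdiff_def)
    then have "D \<subseteq> L" using cp C by (auto simp: symdiff_def)
    then have fD: "finite D" using finite_sub by blast
    have fc: "finite (chainA A)" using cp finite_sub by blast
    have "par C" unfolding CB using oddsym[OF fc fD, of "set es"] cp Dodd by simp
    then show ?thesis using C(3) by simp
  qed
qed

end
context lat begin

lemma goodW:
  assumes E: "E \<subseteq> L" and R: "R \<subseteq> L" "bd R = bd E" "par R \<noteq> par E" "minc R" and K: "K \<subseteq> R"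
  shows "good (symdiff E K)"
proof -
  have fE: "finite E" and fR: "finite R" and fF: "finite K" using E R K finite_sub by auto
  have RF: "R - K = symdiff R K" using K by (auto simp: symdiff_def)
  have sub: "symdiff E K \<subseteq> L" using E R K by (auto simp: symdiff_def)
  have b: "bd (R - K) = bd (symdiff E K)"
    unfolding RF bd_symdiff[OF fR fF] bd_symdiff[OF fE fF] R(2) ..
  have p: "par (R - K) \<noteq> par (symdiff E K)"
    unfolding RF using oddsym[OF fR fF] oddsym[OF fE fF] R(3) by simp
  have m: "\<forall>R'. R' \<subseteq> L \<and> bd R' = bd (symdiff E K) \<longrightarrow> card (R - K) \<le> card R'"
  proof (intro allI impI)
    fix R' assume R': "R' \<subseteq> L \<and> bd R' = bd (symdiff E K)"
    have fR': "finite R'" using R' finite_sub by auto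
    have "bd (symdiff R' K) = bd E"
      using R' bd_symdiff[OF fR' fF] bd_symdiff[OF fE fF] by (auto simp: symdiff_def)
    moreover have "symdiff R' K \<subseteq> L" using R' K R by (auto simp: symdiff_def)
    ultimately have "card R \<le> card (symdiff R' K)" using R(4) R(2) unfolding minc_def by metis
    also have "\<dots> \<le> card R' + card K" by (rule card_symdiff_le[OF fR' fF])
    finally have "card R \<le> card R' + card K" .
    moreover have "card (R - K) = card R - card K" using K fF by (simp add: card_Diff_subset)
    ultimately show "card (R - K) \<le> card R'" by simp
  qed
  show ?thesis unfolding unc_iff[OF w0] using sub b p m R(1)
    by (intro conjI exI[of _ "R - K"]) auto
qed

lemma walk:
  assumes E: "good E" and R: "R \<subseteq> L" "bd R = bd E" "par R \<noteq> par E" "minc R"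
    and K: "finite K" "K \<subseteq> R"
  shows "reach E (symdiff E K)"
  using K
proof (induction K rule: finite_induct)
  case empty
  then show ?case using reach.rrefl[OF E] by (simp add: symdiff_def)
next
  case (insert e K)
  have IH: "reach E (symdiff E K)" using insert by auto
  have EL: "E \<subseteq> L" using E by simp
  have g: "good (symdiff E (insert e K))" by (rule goodW[OF EL R insert(4)])
  show ?case by (rule rstep[OF IH g]) (simp add: symdiff_insert insert(2))
qed

lemma to_cycle:
  assumes E: "good E"
  shows "\<exists>Z. reach E Z \<and> Z \<subseteq> L \<and> bd Z = {} \<and> par Z"
proof -
  have "\<exists>R. R \<subseteq> L \<and> bd R = bd E \<and> par R \<noteq> par E \<and>
     (\<forall>R'. R' \<subseteq> L \<and> bd R' = bd E \<longrightarrow> card R \<le> card R')"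
    using E by (simp only: unc_iff[OF w0])
  then obtain R where R: "R \<subseteq> L" "bd R = bd E" "par R \<noteq> par E"
    "\<forall>R'. R' \<subseteq> L \<and> bd R' = bd E \<longrightarrow> card R \<le> card R'" by blast
  have Rm: "minc R" unfolding minc_def using R(2,4) by simp
  note R = R(1-3) Rm
  have fE: "finite E" and fR: "finite R" using E R finite_sub by auto
  have r: "reach E (symdiff E R)" by (rule walk[OF E R fR]) simp
  have "symdiff E R \<subseteq> L" using E R by (auto simp: symdiff_def)
  moreover have "bd (symdiff E R) = {}" using bd_symdiff[OF fE fR] R(2) by (simp add: symdiff_def)
  moreover have "par (symdiff E R)" using oddsym[OF fE fR] R(3) by simp
  ultimately show ?thesis using r by blast
qed

lemma main_reach:
  assumes "good E" "good E'"
  shows "reach E E'"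
proof -
  obtain Z where Z: "reach E Z" "Z \<subseteq> L" "bd Z = {}" "par Z" using to_cycle[OF assms(1)] by blast
  obtain Z' where Z': "reach E' Z'" "Z' \<subseteq> L" "bd Z' = {}" "par Z'" using to_cycle[OF assms(2)] by blast
  have fZ: "finite Z" and fZ': "finite Z'" using Z Z' finite_sub by auto
  define C where "C = symdiff Z Z'"
  have "C \<subseteq> L" using Z Z' unfolding C_def by (auto simp: symdiff_def)
  moreover have "bd C = {}" unfolding C_def using bd_symdiff[OF fZ fZ'] Z Z' by (simp add: symdiff_def)
  moreover have "\<not> par C" unfolding C_def using oddsym[OF fZ fZ'] Z Z' by simp
  ultimately obtain A where A: "finite A" "A \<subseteq> realP" "C = chainA A" using decomp by blast
  have "reach Z (symdiff Z C)" using path[OF A(1,2) Z(2-4)] A(3) by simp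
  then have zz: "reach Z Z'" unfolding C_def symdiff_self .
  have "reach Z' E'" by (rule reach_sym[OF Z'(1)])
  then show ?thesis using reach_trans zz Z(1) by blast
qed

end

theorem lemma3:
  fixes m n a b s :: int and w :: real
    and fs :: "face list" and es :: "edge list" and E E' :: "edge set"
  assumes "1 \<le> s" and "1 \<le> a" and "1 \<le> b" and "a + s \<le> m - 1" and "b + s \<le> n - 1"
    and "0 < w"
    and "dual_path m n a b s fs es"
    and "E \<subseteq> lat_edges m n a b s" and "E' \<subseteq> lat_edges m n a b s"
    and "uncorrectable (lat_edges m n a b s) (\<lambda>_. w) {} (set es) E"
    and "uncorrectable (lat_edges m n a b s) (\<lambda>_. w) {} (set es) E'"
  shows "\<exists>Es :: edge set list. Es \<noteq> [] \<and> hd Es = E \<and> last Es = E' \<and>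
           (\<forall>X \<in> set Es. X \<subseteq> lat_edges m n a b s \<and>
               uncorrectable (lat_edges m n a b s) (\<lambda>_. w) {} (set es) X) \<and>
           (\<forall>i. Suc i < length Es \<longrightarrow> card (symdiff (Es ! i) (Es ! Suc i)) = 1)"
proof -
  interpret lat m n a b s w fs es
    using assms(1-7) by unfold_locales
  have "reach E E'" by (rule main_reach) (use assms(8-11) in auto)
  then show ?thesis by (rule reach_list)
qed

end
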